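(* Let $n\ge k\ge1$, $m\ge1$. Let $(a_j,b_j)_{j\in[m]}$ be pairs with $a_j\in\mathbb{F}_2^n\setminus\{0\}$, $b_j\in\mathbb{F}_2$, and let $\varphi_j$ be the linear form $y\mapsto\langle a_j,y\rangle$. For each $j$ independently: choose $(\gamma_{j,1},\dots,\gamma_{j,k-1})$ uniformly among $(k-1)$-tuples of linear forms such that $\gamma_{j,1},\dots,\gamma_{j,k-1},\varphi_j$ are linearly independent; choose $\beta_{j,1},\dots,\beta_{j,k-1}\in\mathbb{F}_2$ uniformly and independently; choose a uniformly random permutation and let $(\ell_{j,1},\dots,\ell_{j,k})$ be $(\gamma_{j,1},\dots,\gamma_{j,k-1},\varphi_j)$ in that order and $(\varepsilon_{j,1},\dots,\varepsilon_{j,k})$ be $(\beta_{j,1},\dots,\beta_{j,k-1},1-b_j)$ in the same order; set $V_j=\{x:\ell_{j,i}(x)=\varepsilon_{j,i}\ \forall i\in[k]\}$ and $V=(V_1,\dots,V_m)$. Then: (i) if the $a_j$ are i.i.d. uniform on $\mathbb{F}_2^n\setminus\{0\}$ and the $b_j$ are i.i.d. uniform on $\mathbb{F}_2$ independent of them, then $V\sim\mathbf{P}_{\text{unif}}$; (ii) if the $a_j$ are i.i.d. uniform on $\mathbb{F}_2^n\setminus\{0\}$ and $b_j=\langle a_j,x\rangle+e_j$ for a fixed $x\in\mathbb{F}_2^n$ and i.i.d. $e_j\sim\mathrm{Bernoulli}(\eta)$ independent of the $a_j$, with $\eta\in[0,1/2)$, then $V\sim\mathbf{P}_{x,\pi}$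 with $\pi=1-2\eta$.
   Context: A $k$-flat of $\mathbb{F}_2^n$ is an affine subspace of dimension $n-k$. $q_0$ is the uniform distribution on $k$-flats; for $x\in\mathbb{F}_2^n$, $q_x$ is the uniform distribution on $k$-flats not containing $x$, and $q_{x,\pi}:=(1-\pi)q_0+\pi q_x$. $\mathbf{P}_{\text{unif}}=q_0^{\otimes m}$ and $\mathbf{P}_{x,\pi}=q_{x,\pi}^{\otimes m}$. *)

theory Defs
  imports "HOL-Probability.Probability" "HOL-Combinatorics.Permutations"
begin

section \<open>The vector space F_2^n, modelled as bool lists of length n (True = 1)\<close>

definition vecs :: "nat \<Rightarrow> bool list set" where
  "vecs n = {v. length v = n}"

definition zerov :: "nat \<Rightarrow> bool list" where
  "zerov n = replicate n False"

definition vadd :: "bool list \<Rightarrow> bool list \<Rightarrow> bool list" where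
  "vadd u v = map2 (\<noteq>) u v"

definition ip :: "bool list \<Rightarrow> bool list \<Rightarrow> bool" where
  "ip a y = odd (card {i. i < length a \<and> a ! i \<and> y ! i})"

definition lincomb :: "nat \<Rightarrow> bool list list \<Rightarrow> bool list \<Rightarrow> bool list" where
  "lincomb n vs c = foldr (\<lambda>(ci, v) acc. if ci then vadd v acc else acc) (zip c vs) (zerov n)"

definition lin_indep :: "nat \<Rightarrow> bool list list \<Rightarrow> bool" where
  "lin_indep n vs \<longleftrightarrow> (\<forall>c. length c = length vs \<and> lincomb n vs c = zerov n \<longrightarrow> (\<forall>b\<in>set c. \<not> b))"

definition affine_dim :: "nat \<Rightarrow> nat \<Rightarrow> bool list set \<Rightarrow> bool" where
  "affine_dim n d S \<longleftrightarrow> (\<exists>v bs. v \<in> vecs n \<and> set bs \<subseteq> vecs n \<and> length bs = d \<and> lin_indep n bs \<and>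
      S = {vadd v (lincomb n bs c) | c. length c = d})"

definition kflats :: "nat \<Rightarrow> nat \<Rightarrow> bool list set set" where
  "kflats n k = {S. affine_dim n (n - k) S}"

definition q0 :: "nat \<Rightarrow> nat \<Rightarrow> bool list set pmf" where
  "q0 n k = pmf_of_set (kflats n k)"

definition qx :: "nat \<Rightarrow> nat \<Rightarrow> bool list \<Rightarrow> bool list set pmf" where
  "qx n k x = pmf_of_set {S \<in> kflats n k. x \<notin> S}"

definition qxpi :: "nat \<Rightarrow> nat \<Rightarrow> bool list \<Rightarrow> real \<Rightarrow> bool list set pmf" where
  "qxpi n k x \<pi> = bind_pmf (bernoulli_pmf \<pi>) (\<lambda>c. if c then qx n k x else q0 n k)"

fun seq_pmf :: "'a pmf list \<Rightarrow> 'a list pmf" where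
  "seq_pmf [] = return_pmf []"
| "seq_pmf (p # ps) = bind_pmf p (\<lambda>x. bind_pmf (seq_pmf ps) (\<lambda>xs. return_pmf (x # xs)))"

definition iid_pmf :: "nat \<Rightarrow> 'a pmf \<Rightarrow> 'a list pmf" where
  "iid_pmf m p = seq_pmf (replicate m p)"

definition P_unif :: "nat \<Rightarrow> nat \<Rightarrow> nat \<Rightarrow> bool list set list pmf" where
  "P_unif n k m = iid_pmf m (q0 n k)"

definition P_xpi :: "nat \<Rightarrow> nat \<Rightarrow> nat \<Rightarrow> bool list \<Rightarrow> real \<Rightarrow> bool list set list pmf" where
  "P_xpi n k m x \<pi> = iid_pmf m (qxpi n k x \<pi>)"

text \<open>Linear forms y \<mapsto> <g, y> are identified with their coefficient vectors g.\<close>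
definition flat_of :: "nat \<Rightarrow> nat \<Rightarrow> bool list \<Rightarrow> bool \<Rightarrow> bool list set pmf" where
  "flat_of n k a b =
     bind_pmf (pmf_of_set {gs. length gs = k - 1 \<and> set gs \<subseteq> vecs n \<and> lin_indep n (gs @ [a])}) (\<lambda>gs.
     bind_pmf (pmf_of_set {bs :: bool list. length bs = k - 1}) (\<lambda>bs.
     bind_pmf (pmf_of_set {\<sigma>. \<sigma> permutes {..<k}}) (\<lambda>\<sigma>.
       let l = (\<lambda>i. (gs @ [a]) ! \<sigma> i); e = (\<lambda>i. (bs @ [\<not> b]) ! \<sigma> i)
       in return_pmf {y \<in> vecs n. \<forall>i<k. ip (l i) y = e i})))"

definition nonzero_vecs :: "nat \<Rightarrow> bool list set" where
  "nonzero_vecs n = vecs n - {zerov n}"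

definition V_unif :: "nat \<Rightarrow> nat \<Rightarrow> nat \<Rightarrow> bool list set list pmf" where
  "V_unif n k m =
     bind_pmf (iid_pmf m (pmf_of_set (nonzero_vecs n))) (\<lambda>as.
     bind_pmf (iid_pmf m (pmf_of_set (UNIV :: bool set))) (\<lambda>bs.
       seq_pmf (map2 (flat_of n k) as bs)))"

definition V_lpn :: "nat \<Rightarrow> nat \<Rightarrow> nat \<Rightarrow> bool list \<Rightarrow> real \<Rightarrow> bool list set list pmf" where
  "V_lpn n k m x \<eta> =
     bind_pmf (iid_pmf m (pmf_of_set (nonzero_vecs n))) (\<lambda>as.
     bind_pmf (iid_pmf m (bernoulli_pmf \<eta>)) (\<lambda>es.
       seq_pmf (map2 (flat_of n k) as (map2 (\<lambda>a e. ip a x \<noteq> e) as es))))"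

end

theory Submission
  imports Defs
begin


section \<open>Basic vector facts\<close>

lemma vecs_iff[simp]: "v \<in> vecs n \<longleftrightarrow> length v = n"
  by (simp add: vecs_def)

lemma length_vadd[simp]: "length (vadd u v) = min (length u) (length v)"
  by (simp add: vadd_def)

lemma length_zerov[simp]: "length (zerov n) = n"
  by (simp add: zerov_def)

lemma nth_vadd[simp]: "i < length u \<Longrightarrow> i < length v \<Longrightarrow> vadd u v ! i = (u ! i \<noteq> v ! i)"
  by (simp add: vadd_def)

lemma nth_zerov[simp]: "i < n \<Longrightarrow> zerov n ! i = False"
  by (simp add: zerov_def)

lemma vadd_comm: "vadd u v = vadd v u"
  unfolding vadd_def by (rule nth_equalityI) auto

lemma vadd_assoc: "length u = length v \<Longrightarrow> length v = length w \<Longrightarrow> vadd (vadd u v) w = vadd u (vadd v w)"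
  by (rule nth_equalityI) auto

lemma vadd_self[simp]: "vadd v v = zerov (length v)"
  by (rule nth_equalityI) auto

lemma vadd_zero_left[simp]: "length v = n \<Longrightarrow> vadd (zerov n) v = v"
  by (rule nth_equalityI) auto

lemma vadd_zero_right[simp]: "length v = n \<Longrightarrow> vadd v (zerov n) = v"
  by (rule nth_equalityI) auto

lemma vadd_cancel_left: "length u = length v \<Longrightarrow> length v = length w \<Longrightarrow> vadd u (vadd u w) = w"
  by (rule nth_equalityI) auto

lemma vadd_eq_iff: "length u = n \<Longrightarrow> length v = n \<Longrightarrow> length w = n \<Longrightarrow> vadd u v = w \<longleftrightarrow> v = vadd u w"
  by (metis vadd_cancel_left)

lemma vadd_left_inj: "length u = n \<Longrightarrow> length x = n \<Longrightarrow> length y = n \<Longrightarrow> vadd u x = vadd u y \<longleftrightarrow> x = y"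
proof
  assume "length u = n" "length x = n" "length y = n" "vadd u x = vadd u y"
  then show "x = y"
    by (metis vadd_cancel_left)
qed simp

lemma vadd_solve: "length v = n \<Longrightarrow> length x = n \<Longrightarrow> length y = n \<Longrightarrow> x = vadd v y \<Longrightarrow> v = vadd x y"
  by (intro nth_equalityI) auto

lemma vadd_zero_eq: "length v = n \<Longrightarrow> length y = n \<Longrightarrow> vadd v y = zerov n \<Longrightarrow> v = y"
  by (metis vadd_solve vadd_zero_left length_zerov)

lemma card_vecs: "card (vecs n) = 2 ^ n"
  using card_lists_length_eq[of "UNIV::bool set" n] by (simp add: vecs_def)

lemma finite_vecs[simp]: "finite (vecs n)"
  using finite_lists_length_eq[of "UNIV::bool set" n] by (simp add: vecs_def)

section \<open>Inner product\<close>

fun ipl :: "bool list \<Rightarrow> bool list \<Rightarrow> bool" where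
  "ipl [] _ = False"
| "ipl (a # as) [] = False"
| "ipl (a # as) (y # ys) = ((a \<and> y) \<noteq> ipl as ys)"

lemma ip_ipl: "length a = length y \<Longrightarrow> ip a y = ipl a y"
proof (induction a arbitrary: y)
  case Nil then show ?case by (simp add: ip_def)
next
  case (Cons a as)
  then obtain z zs where y: "y = z # zs" and l: "length as = length zs" by (cases y) auto
  have eq: "{i. i < length (a # as) \<and> (a # as) ! i \<and> y ! i} =
      (if a \<and> z then {0} else {}) \<union> Suc ` {i. i < length as \<and> as ! i \<and> zs ! i}"
    unfolding y apply (rule set_eqI) apply (case_tac x) by auto
  have "card {i. i < length (a # as) \<and> (a # as) ! i \<and> y ! i} =
      (if a \<and> z then 1 else 0) + card {i. i < length as \<and> as ! i \<and> zs ! i}"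
    unfolding eq by (subst card_Un_disjoint) (auto simp: card_image)
  then show ?case using Cons.IH[OF l] unfolding ip_def y by auto
qed

lemma ipl_vadd1: "length a = length a' \<Longrightarrow> length a' = length y \<Longrightarrow> ipl (vadd a a') y = (ipl a y \<noteq> ipl a' y)"
  by (induction a a' y rule: list_induct3) (auto simp: vadd_def zerov_def)

lemma ipl_sym: "length a = length y \<Longrightarrow> ipl a y = ipl y a"
  by (induction a y rule: list_induct2) auto

lemma ip_vadd1: "length a = n \<Longrightarrow> length a' = n \<Longrightarrow> length y = n \<Longrightarrow> ip (vadd a a') y = (ip a y \<noteq> ip a' y)"
  by (simp add: ip_ipl ipl_vadd1)

lemma ip_sym: "length a = length y \<Longrightarrow> ip a y = ip y a"
  by (simp add: ip_ipl ipl_sym)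

lemma ip_vadd2: "length a = n \<Longrightarrow> length y = n \<Longrightarrow> length y' = n \<Longrightarrow> ip a (vadd y y') = (ip a y \<noteq> ip a y')"
  by (metis ip_sym ip_vadd1 length_vadd min.idem)

lemma ip_zero1[simp]: "ip (zerov n) y = False"
proof -
  have eq: "{i. i < length (zerov n) \<and> zerov n ! i \<and> y ! i} = {}" by auto
  show ?thesis by (simp only: ip_def eq) simp
qed

lemma ip_zero2: "length a = n \<Longrightarrow> ip a (zerov n) = False"
  by (metis ip_sym ip_zero1 length_zerov)

lemma exists_ip_true: assumes "length l = n" "l \<noteq> zerov n" shows "\<exists>z\<in>vecs n. ip l z"
proof -
  have "\<exists>i<n. l ! i"
  proof (rule ccontr)
    assume "\<not> (\<exists>i<n. l ! i)"
    then have "l = zerov n" using assms(1) by (intro nth_equalityI) auto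
    then show False using assms(2) by simp
  qed
  then obtain i where i: "i < n" "l ! i" by blast
  let ?z = "(zerov n)[i := True]"
  have "{j. j < length l \<and> l ! j \<and> ?z ! j} = {i}"
    using i assms by (auto simp: nth_list_update)
  then have "ip l ?z" by (simp add: ip_def)
  then show ?thesis by (intro bexI[of _ ?z]) auto
qed

section \<open>Linear combinations and lspan\<close>

lemma lincomb_Nil1[simp]: "lincomb n [] c = zerov n"
  by (simp add: lincomb_def)

lemma lincomb_Nil2[simp]: "lincomb n vs [] = zerov n"
  by (simp add: lincomb_def)

lemma lincomb_Cons[simp]: "lincomb n (v # vs) (c # cs) = (if c then vadd v (lincomb n vs cs) else lincomb n vs cs)"
  by (simp add: lincomb_def)

lemma length_lincomb: "set vs \<subseteq> vecs n \<Longrightarrow> length (lincomb n vs c) = n"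
proof (induction vs arbitrary: c)
  case Nil then show ?case by simp
next
  case (Cons v vs) then show ?case by (cases c) auto
qed

definition lspan :: "nat \<Rightarrow> bool list list \<Rightarrow> bool list set" where
  "lspan n vs = {lincomb n vs c | c. length c = length vs}"

lemma span_Nil[simp]: "lspan n [] = {zerov n}"
  by (auto simp: lspan_def)

lemma span_Cons: "lspan n (v # vs) = lspan n vs \<union> vadd v ` lspan n vs"
proof (intro equalityI subsetI)
  fix x assume "x \<in> lspan n (v # vs)"
  then obtain c where c: "length c = Suc (length vs)" "x = lincomb n (v # vs) c" by (auto simp: lspan_def)
  then obtain c0 cs where c0: "c = c0 # cs" "length cs = length vs" by (cases c) auto
  have m: "lincomb n vs cs \<in> lspan n vs" using c0 unfolding lspan_def by blast
  show "x \<in> lspan n vs \<union> vadd v ` lspan n vs"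
  proof (cases c0)
    case True then have "x = vadd v (lincomb n vs cs)" using c c0 by simp
    then show ?thesis using m by blast
  next
    case False then have "x = lincomb n vs cs" using c c0 by simp
    then show ?thesis using m by blast
  qed
next
  fix x assume "x \<in> lspan n vs \<union> vadd v ` lspan n vs"
  then show "x \<in> lspan n (v # vs)"
  proof
    assume "x \<in> lspan n vs"
    then obtain c where c: "length c = length vs" "x = lincomb n vs c" unfolding lspan_def by blast
    then have "x = lincomb n (v # vs) (False # c)" "length (False # c) = length (v # vs)" by simp_all
    then show ?thesis unfolding lspan_def by blast
  next
    assume "x \<in> vadd v ` lspan n vs"
    then obtain c where c: "length c = length vs" "x = vadd v (lincomb n vs c)" unfolding lspan_def by blast
    then have "x = lincomb n (v # vs) (True # c)" "length (True # c) = length (v # vs)" by simp_all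
    then show ?thesis unfolding lspan_def by blast
  qed
qed

lemma span_subset_vecs: assumes "set vs \<subseteq> vecs n" shows "lspan n vs \<subseteq> vecs n"
proof
  fix x assume "x \<in> lspan n vs"
  then obtain c where "x = lincomb n vs c" unfolding lspan_def by blast
  then show "x \<in> vecs n" using length_lincomb[OF assms] by simp
qed

lemma zero_in_span: "zerov n \<in> lspan n vs"
proof -
  have "lincomb n vs (replicate (length vs) False) = zerov n"
    by (induction vs) simp_all
  then show ?thesis unfolding lspan_def by (intro CollectI exI[of _ "replicate (length vs) False"]) simp
qed

lemma lincomb_add:
  assumes "set vs \<subseteq> vecs n" "length c = length vs" "length c' = length vs"
  shows "vadd (lincomb n vs c) (lincomb n vs c') = lincomb n vs (map2 (\<noteq>) c c')"
  using assms
proof (induction vs arbitrary: c c')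
  case Nil then show ?case by (simp add: zerov_def vadd_def)
next
  case (Cons v vs)
  obtain a cs where a: "c = a # cs" "length cs = length vs" using Cons.prems by (cases c) auto
  obtain b cs' where b: "c' = b # cs'" "length cs' = length vs" using Cons.prems by (cases c') auto
  have IH: "vadd (lincomb n vs cs) (lincomb n vs cs') = lincomb n vs (map2 (\<noteq>) cs cs')"
    using Cons a b by auto
  have lv: "length v = n" using Cons.prems by simp
  have l1: "length (lincomb n vs cs) = n" and l2: "length (lincomb n vs cs') = n"
    using Cons.prems length_lincomb by auto
  let ?x = "lincomb n vs cs" and ?y = "lincomb n vs cs'"
  have e1: "vadd (vadd v ?x) ?y = vadd v (vadd ?x ?y)" using lv l1 l2 by (intro nth_equalityI) auto
  have e2: "vadd ?x (vadd v ?y) = vadd v (vadd ?x ?y)"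
    using lv l1 l2 by (intro nth_equalityI) auto
  have e3: "vadd (vadd v ?x) (vadd v ?y) = vadd ?x ?y"
    using lv l1 l2 by (intro nth_equalityI) auto
  show ?case using IH e1 e2 e3 unfolding a b by (cases a; cases b) simp_all
qed

lemma span_vadd_closed: "set vs \<subseteq> vecs n \<Longrightarrow> x \<in> lspan n vs \<Longrightarrow> y \<in> lspan n vs \<Longrightarrow> vadd x y \<in> lspan n vs"
proof -
  assume vs: "set vs \<subseteq> vecs n" and "x \<in> lspan n vs" "y \<in> lspan n vs"
  then obtain c c' where c: "length c = length vs" "x = lincomb n vs c" "length c' = length vs" "y = lincomb n vs c'"
    unfolding lspan_def by blast
  then have "vadd x y = lincomb n vs (map2 (\<noteq>) c c')" using lincomb_add[OF vs] by simp
  moreover have "length (map2 (\<noteq>) c c') = length vs" using c by simp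
  ultimately show ?thesis unfolding lspan_def by blast
qed

lemma in_span_self: "v \<in> set vs \<Longrightarrow> set vs \<subseteq> vecs n \<Longrightarrow> v \<in> lspan n vs"
proof (induction vs)
  case Nil then show ?case by simp
next
  case (Cons w vs)
  show ?case
  proof (cases "v = w")
    case True
    have "vadd w (zerov n) \<in> vadd w ` lspan n vs" using zero_in_span by blast
    moreover have "vadd w (zerov n) = w" using Cons.prems by simp
    ultimately show ?thesis using True by (simp add: span_Cons)
  next
    case False then have "v \<in> lspan n vs" using Cons by simp
    then show ?thesis by (simp add: span_Cons)
  qed
qed

lemma span_subset_subspace:
  assumes "zerov n \<in> W" "\<And>x y. x \<in> W \<Longrightarrow> y \<in> W \<Longrightarrow> vadd x y \<in> W" "set vs \<subseteq> W"
  shows "lspan n vs \<subseteq> W"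
  using assms(3)
proof (induction vs)
  case Nil then show ?case using assms by simp
next
  case (Cons v vs) then show ?case using assms by (auto simp: span_Cons)
qed

lemma span_mono_span: "set vs \<subseteq> vecs n \<Longrightarrow> set ws \<subseteq> lspan n vs \<Longrightarrow> lspan n ws \<subseteq> lspan n vs"
  by (rule span_subset_subspace) (auto intro: zero_in_span span_vadd_closed)

section \<open>Independence\<close>

lemma lin_indep_Nil[simp]: "lin_indep n []"
  by (simp add: lin_indep_def)

lemma lin_indep_Cons:
  assumes "set (v # vs) \<subseteq> vecs n"
  shows "lin_indep n (v # vs) \<longleftrightarrow> lin_indep n vs \<and> v \<notin> lspan n vs"
proof
  assume H: "lin_indep n (v # vs)"
  have "lin_indep n vs"
    unfolding lin_indep_def
  proof (intro allI impI)
    fix c assume c: "length c = length vs \<and> lincomb n vs c = zerov n"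
    then have "\<forall>b\<in>set (False # c). \<not> b" using H unfolding lin_indep_def by (metis length_Cons lincomb_Cons)
    then show "\<forall>b\<in>set c. \<not> b" by simp
  qed
  moreover have "v \<notin> lspan n vs"
  proof
    assume "v \<in> lspan n vs"
    then obtain c where c: "length c = length vs" "v = lincomb n vs c" by (auto simp: lspan_def)
    have "lincomb n (v # vs) (True # c) = zerov n" using c assms by simp
    then show False using H c unfolding lin_indep_def by (metis length_Cons list.set_intros(1))
  qed
  ultimately show "lin_indep n vs \<and> v \<notin> lspan n vs" by blast
next
  assume H: "lin_indep n vs \<and> v \<notin> lspan n vs"
  show "lin_indep n (v # vs)"
    unfolding lin_indep_def
  proof (intro allI impI)
    fix c assume c: "length c = length (v # vs) \<and> lincomb n (v # vs) c = zerov n"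
    then obtain c0 cs where c0: "c = c0 # cs" "length cs = length vs" by (cases c) auto
    have lc: "length (lincomb n vs cs) = n" using assms length_lincomb by auto
    have "\<not> c0"
    proof
      assume c0t: c0
      then have "vadd v (lincomb n vs cs) = zerov n" using c c0 by simp
      moreover have "length v = n" using assms by simp
      ultimately have "v = lincomb n vs cs" using lc vadd_zero_eq by blast
      then show False using H c0 by (auto simp: lspan_def)
    qed
    moreover have "\<forall>b\<in>set cs. \<not> b" using H c c0 \<open>\<not> c0\<close> unfolding lin_indep_def by auto
    ultimately show "\<forall>b\<in>set c. \<not> b" using c0 by simp
  qed
qed

lemma card_span:
  assumes "set vs \<subseteq> vecs n" "lin_indep n vs"
  shows "card (lspan n vs) = 2 ^ length vs"
  using assms
proof (induction vs)
  case Nil then show ?case by simp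
next
  case (Cons v vs)
  have li: "lin_indep n vs" "v \<notin> lspan n vs" using Cons.prems lin_indep_Cons by auto
  have sv: "lspan n vs \<subseteq> vecs n" using Cons.prems span_subset_vecs by auto
  have v: "length v = n" using Cons.prems by auto
  have fin: "finite (lspan n vs)" using finite_subset[OF sv finite_vecs] .
  have inj: "inj_on (vadd v) (lspan n vs)"
  proof (rule inj_onI)
    fix x y assume "x \<in> lspan n vs" "y \<in> lspan n vs" "vadd v x = vadd v y"
    then show "x = y" using vadd_left_inj[of v n x y] sv v by (auto simp: subset_iff)
  qed
  have disj: "lspan n vs \<inter> vadd v ` lspan n vs = {}"
  proof (rule ccontr)
    assume "lspan n vs \<inter> vadd v ` lspan n vs \<noteq> {}"
    then obtain x y where xy: "x \<in> lspan n vs" "y \<in> lspan n vs" "x = vadd v y" by auto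
    then have "v = vadd x y" using vadd_solve[of v n x y] sv v by (auto simp: subset_iff)
    moreover have "vadd x y \<in> lspan n vs" using span_vadd_closed[of vs n x y] Cons.prems xy by auto
    ultimately show False using li by simp
  qed
  have "card (lspan n (v # vs)) = card (lspan n vs) + card (vadd v ` lspan n vs)"
    unfolding span_Cons by (rule card_Un_disjoint[OF fin finite_imageI[OF fin] disj])
  also have "card (vadd v ` lspan n vs) = card (lspan n vs)" by (rule card_image[OF inj])
  also have "card (lspan n vs) = 2 ^ length vs" using Cons.IH li Cons.prems by simp
  finally show ?case by simp
qed

lemma indep_length_le:
  assumes "set vs \<subseteq> vecs n" "lin_indep n vs"
  shows "length vs \<le> n"
proof -
  have "card (lspan n vs) \<le> card (vecs n)"
    using span_subset_vecs[OF assms(1)] by (intro card_mono) auto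
  then have "(2::nat) ^ length vs \<le> 2 ^ n" using card_span[OF assms] card_vecs by simp
  then show ?thesis by simp
qed



definition aflat :: "nat \<Rightarrow> bool list list \<Rightarrow> bool list \<Rightarrow> bool list set" where
  "aflat n L e = {y \<in> vecs n. \<forall>i<length L. ip (L ! i) y = e ! i}"

lemma flat_Nil[simp]: "aflat n [] e = vecs n"
  by (auto simp: aflat_def)

lemma flat_length: "y \<in> aflat n L e \<Longrightarrow> length y = n"
  by (simp add: aflat_def)

lemma flat_Cons: "aflat n (l # L) (c # e) = {y \<in> aflat n L e. ip l y = c}"
  unfolding aflat_def by (auto simp: less_Suc_eq_0_disj)

lemma flat_subset: "aflat n L e \<subseteq> vecs n"
  by (auto simp: aflat_def)

lemma finite_flat[simp]: "finite (aflat n L e)"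
  using finite_subset[OF flat_subset finite_vecs] .

lemma vadd_flat:
  assumes "y \<in> aflat n L e" "set L \<subseteq> vecs n" "z \<in> vecs n" "\<forall>m\<in>set L. \<not> ip m z"
  shows "vadd z y \<in> aflat n L e"
proof -
  have y: "length y = n" using assms(1) by (simp add: aflat_def)
  have z: "length z = n" using assms(3) by simp
  show ?thesis unfolding aflat_def
  proof (intro CollectI conjI allI impI)
    show "vadd z y \<in> vecs n" using y z by simp
    fix i assume i: "i < length L"
    then have Li: "length (L ! i) = n" "\<not> ip (L ! i) z" using assms(2,4) nth_mem by (auto simp: subset_iff)
    have "ip (L ! i) (vadd z y) = (ip (L ! i) z \<noteq> ip (L ! i) y)" using ip_vadd2[OF Li(1) z y] .
    also have "\<dots> = e ! i" using Li(2) assms(1) i by (simp add: aflat_def)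
    finally show "ip (L ! i) (vadd z y) = e ! i" .
  qed
qed

lemma not_in_span_Cons:
  assumes "set (m # L) \<subseteq> vecs n" "length l = n" "l \<notin> lspan n (m # L)"
  shows "l \<notin> lspan n L" "vadd m l \<notin> lspan n L"
proof -
  show "l \<notin> lspan n L" using assms(3) by (simp add: span_Cons)
  show "vadd m l \<notin> lspan n L"
  proof
    assume s: "vadd m l \<in> lspan n L"
    have m: "length m = n" using assms(1) by simp
    have "l = vadd m (vadd m l)" using vadd_cancel_left[of m l l] m assms(2) by simp
    then have "l \<in> vadd m ` lspan n L" using s by blast
    then show False using assms(3) by (simp add: span_Cons)
  qed
qed

lemma sep:
  assumes "set L \<subseteq> vecs n" "length l = n" "l \<notin> lspan n L"
  shows "\<exists>z\<in>vecs n. (\<forall>m\<in>set L. \<not> ip m z) \<and> ip l z"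
  using assms
proof (induction L arbitrary: l)
  case Nil
  then have "l \<noteq> zerov n" by simp
  then obtain z where "z \<in> vecs n" "ip l z" using exists_ip_true[OF Nil.prems(2)] by blast
  then show ?case by auto
next
  case (Cons m L)
  have sL: "set L \<subseteq> vecs n" and mn: "length m = n" using Cons.prems by auto
  have n1: "l \<notin> lspan n L" and n2: "vadd m l \<notin> lspan n L"
    using not_in_span_Cons[OF Cons.prems] by auto
  obtain z1 where z1: "z1 \<in> vecs n" "\<forall>m'\<in>set L. \<not> ip m' z1" "ip l z1"
    using Cons.IH[OF sL Cons.prems(2) n1] by blast
  show ?case
  proof (cases "ip m z1")
    case False then show ?thesis using z1 by auto
  next
    case True
    have lml: "length (vadd m l) = n" using mn Cons.prems(2) by simp
    obtain z3 where z3: "z3 \<in> vecs n" "\<forall>m'\<in>set L. \<not> ip m' z3" "ip (vadd m l) z3"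
      using Cons.IH[OF sL lml n2] by blast
    have z3': "ip m z3 \<noteq> ip l z3" using z3(3) ip_vadd1[OF mn Cons.prems(2)] z3(1) by simp
    show ?thesis
    proof (cases "ip m z3")
      case False then show ?thesis using z3 z3' by auto
    next
      case True2: True
      have lz: "length z1 = n" "length z3 = n" using z1 z3 by auto
      let ?z = "vadd z1 z3"
      have "ip m ?z = False" using ip_vadd2[OF mn lz] True True2 by simp
      moreover have "ip l ?z = True" using ip_vadd2[OF Cons.prems(2) lz] True2 z3' z1(3) by simp
      moreover have "\<forall>m'\<in>set L. \<not> ip m' ?z"
      proof
        fix m' assume "m' \<in> set L"
        then have "length m' = n" "\<not> ip m' z1" "\<not> ip m' z3" using sL z1 z3 by auto
        then show "\<not> ip m' ?z" using ip_vadd2[of m' n z1 z3] lz by simp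
      qed
      moreover have "?z \<in> vecs n" using lz by simp
      ultimately show ?thesis by (intro bexI[of _ ?z]) auto
    qed
  qed
qed

lemma card_flat:
  assumes "set L \<subseteq> vecs n" "lin_indep n L" "length e = length L"
  shows "card (aflat n L e) = 2 ^ (n - length L)"
  using assms
proof (induction L arbitrary: e)
  case Nil then show ?case by (simp add: card_vecs)
next
  case (Cons l L)
  obtain c e' where e: "e = c # e'" "length e' = length L" using Cons.prems(3) by (cases e) auto
  have sL: "set L \<subseteq> vecs n" and ln: "length l = n" using Cons.prems by auto
  have li: "lin_indep n L" "l \<notin> lspan n L" using lin_indep_Cons[OF Cons.prems(1)] Cons.prems(2) by auto
  have le: "Suc (length L) \<le> n" using indep_length_le[OF Cons.prems(1,2)] by simp
  let ?T = "aflat n L e'"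
  have cT: "card ?T = 2 ^ (n - length L)" using Cons.IH[OF sL li(1) e(2)] .
  obtain z where z: "z \<in> vecs n" "\<forall>m\<in>set L. \<not> ip m z" "ip l z" using sep[OF sL ln li(2)] by blast
  have zn: "length z = n" using z by simp
  let ?A = "{y \<in> ?T. ip l y = c}" and ?B = "{y \<in> ?T. ip l y \<noteq> c}"
  have img: "vadd z ` ?A = ?B"
  proof (intro equalityI subsetI)
    fix x assume "x \<in> vadd z ` ?A"
    then obtain y where y: "y \<in> ?T" "ip l y = c" "x = vadd z y" by blast
    have yn: "length y = n" using y(1) by (rule flat_length)
    have "vadd z y \<in> ?T" using vadd_flat[OF y(1) sL z(1,2)] .
    moreover have "ip l (vadd z y) \<noteq> c" using ip_vadd2[OF ln zn yn] z(3) y(2) by simp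
    ultimately show "x \<in> ?B" using y by simp
  next
    fix x assume x: "x \<in> ?B"
    have xn: "length x = n" using x flat_length by blast
    have "vadd z x \<in> ?T" using vadd_flat[of x n L e' z] x sL z by simp
    moreover have "ip l (vadd z x) = c" using ip_vadd2[OF ln zn xn] z(3) x by simp
    moreover have "x = vadd z (vadd z x)" using vadd_cancel_left[of z x x] zn xn by simp
    ultimately show "x \<in> vadd z ` ?A" by blast
  qed
  have inj: "inj_on (vadd z) ?A"
  proof (rule inj_onI)
    fix x y assume "x \<in> ?A" "y \<in> ?A" "vadd z x = vadd z y"
    moreover have "length x = n" "length y = n" using \<open>x \<in> ?A\<close> \<open>y \<in> ?A\<close> flat_length by blast+
    ultimately show "x = y" using vadd_left_inj[of z n x y] zn by simp
  qed
  have cAB: "card ?B = card ?A" using card_image[OF inj] img by simp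
  have TAB: "?T = ?A \<union> ?B" by auto
  have "card (?A \<union> ?B) = card ?A + card ?B" by (rule card_Un_disjoint) auto
  then have "card ?T = card ?A + card ?B" using TAB by simp
  then have "card ?A * 2 = 2 ^ (n - length L)" using cAB cT by simp
  moreover have "(2::nat) ^ (n - length L) = 2 ^ (n - Suc (length L)) * 2"
    using le by (metis Suc_diff_le Suc_le_D diff_Suc_Suc power_Suc2)
  ultimately have "card ?A = 2 ^ (n - Suc (length L))" by simp
  moreover have "aflat n (l # L) e = ?A" using e by (simp add: flat_Cons)
  ultimately show ?case by simp
qed

lemma max_indep:
  assumes "D \<subseteq> vecs n"
  shows "\<exists>bs. set bs \<subseteq> D \<and> lin_indep n bs \<and> D \<subseteq> lspan n bs"
proof (rule ccontr)
  assume H: "\<not> ?thesis"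
  have "\<exists>bs. set bs \<subseteq> D \<and> lin_indep n bs \<and> length bs = j" for j
  proof (induction j)
    case 0 then show ?case by (intro exI[of _ "[]"]) simp
  next
    case (Suc j)
    then obtain bs where bs: "set bs \<subseteq> D" "lin_indep n bs" "length bs = j" by blast
    then have "\<not> D \<subseteq> lspan n bs" using H by blast
    then obtain d where d: "d \<in> D" "d \<notin> lspan n bs" by blast
    have s: "set (d # bs) \<subseteq> vecs n" using bs d assms by auto
    have "lin_indep n (d # bs)" using lin_indep_Cons[OF s] bs d by simp
    then show ?case using bs d by (intro exI[of _ "d # bs"]) auto
  qed
  then obtain bs where bs: "set bs \<subseteq> D" "lin_indep n bs" "length bs = Suc n" by blast
  then show False using indep_length_le[of bs n] assms by auto
qed

lemma ip_lincomb_zero: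
  assumes "set bs \<subseteq> vecs n" "length y = n" "\<forall>b\<in>set bs. \<not> ip b y"
  shows "\<not> ip (lincomb n bs c) y"
  using assms
proof (induction bs arbitrary: c)
  case Nil then show ?case by simp
next
  case (Cons b bs)
  show ?case
  proof (cases c)
    case Nil then show ?thesis by simp
  next
    case (Cons c0 cs)
    have "\<not> ip (lincomb n bs cs) y" using Cons.IH Cons.prems by auto
    moreover have "length (lincomb n bs cs) = n" using length_lincomb Cons.prems by auto
    moreover have "length b = n" "\<not> ip b y" using Cons.prems by auto
    ultimately show ?thesis unfolding Cons by (simp add: ip_vadd1[of b n "lincomb n bs cs" y] Cons.prems(2))
  qed
qed



lemma ip_nth_len: "set L \<subseteq> vecs n \<Longrightarrow> i < length L \<Longrightarrow> length (L ! i) = n"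
  using nth_mem by (auto simp: subset_iff)

lemma flat_in_kflats:
  assumes L: "set L \<subseteq> vecs n" "lin_indep n L" and e: "length e = length L" and k: "length L = k"
  shows "aflat n L e \<in> kflats n k"
proof -
  let ?S = "aflat n L e" and ?D = "aflat n L (replicate k False)"
  have cS: "card ?S = 2 ^ (n - k)" using card_flat[OF L e] k by simp
  then have "?S \<noteq> {}" by (metis card.empty power_not_zero zero_neq_numeral)
  then obtain v where v: "v \<in> ?S" by blast
  have vn: "length v = n" using v by (rule flat_length)
  have Dv: "?D \<subseteq> vecs n" by (rule flat_subset)
  obtain bs where bs: "set bs \<subseteq> ?D" "lin_indep n bs" "?D \<subseteq> lspan n bs" using max_indep[OF Dv] by blast
  have bsv: "set bs \<subseteq> vecs n" using bs(1) Dv by blast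
  have z: "zerov n \<in> ?D" unfolding aflat_def using ip_zero2 ip_nth_len[OF L(1)] k by auto
  have cl: "vadd x y \<in> ?D" if "x \<in> ?D" "y \<in> ?D" for x y
  proof -
    have xn: "length x = n" and yn: "length y = n" using that flat_length by blast+
    show ?thesis unfolding aflat_def
    proof (intro CollectI conjI allI impI)
      show "vadd x y \<in> vecs n" using xn yn by simp
      fix i assume i: "i < length L"
      have "ip (L ! i) (vadd x y) = (ip (L ! i) x \<noteq> ip (L ! i) y)"
        using ip_vadd2[OF ip_nth_len[OF L(1) i] xn yn] .
      also have "\<dots> = False" using that i k by (simp add: aflat_def)
      finally show "ip (L ! i) (vadd x y) = replicate k False ! i" using i k by simp
    qed
  qed
  have "lspan n bs \<subseteq> ?D" by (rule span_subset_subspace[OF z cl bs(1)])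
  then have Dspan: "?D = lspan n bs" using bs(3) by blast
  have "card ?D = 2 ^ (n - k)" using card_flat[OF L, of "replicate k False"] k by simp
  then have "(2::nat) ^ length bs = 2 ^ (n - k)" using card_span[OF bsv bs(2)] Dspan by simp
  then have lbs: "length bs = n - k" by simp
  have SD: "?S = vadd v ` ?D"
  proof (intro equalityI subsetI)
    fix y assume y: "y \<in> ?S"
    have yn: "length y = n" using y by (rule flat_length)
    have "vadd v y \<in> ?D" unfolding aflat_def
    proof (intro CollectI conjI allI impI)
      show "vadd v y \<in> vecs n" using yn vn by simp
      fix i assume i: "i < length L"
      have "ip (L ! i) (vadd v y) = (ip (L ! i) v \<noteq> ip (L ! i) y)"
        using ip_vadd2[OF ip_nth_len[OF L(1) i] vn yn] .
      also have "\<dots> = False" using v y i by (simp add: aflat_def)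
      finally show "ip (L ! i) (vadd v y) = replicate k False ! i" using i k by simp
    qed
    moreover have "y = vadd v (vadd v y)" using vadd_cancel_left[of v y y] vn yn by simp
    ultimately show "y \<in> vadd v ` ?D" by blast
  next
    fix x assume "x \<in> vadd v ` ?D"
    then obtain d where d: "d \<in> ?D" "x = vadd v d" by blast
    have dn: "length d = n" using d(1) by (rule flat_length)
    have "vadd v d \<in> ?S" unfolding aflat_def
    proof (intro CollectI conjI allI impI)
      show "vadd v d \<in> vecs n" using dn vn by simp
      fix i assume i: "i < length L"
      have "ip (L ! i) (vadd v d) = (ip (L ! i) v \<noteq> ip (L ! i) d)"
        using ip_vadd2[OF ip_nth_len[OF L(1) i] vn dn] .
      also have "\<dots> = e ! i" using v d i k by (simp add: aflat_def)
      finally show "ip (L ! i) (vadd v d) = e ! i" .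
    qed
    then show "x \<in> ?S" using d by simp
  qed
  have "?S = {vadd v (lincomb n bs c) | c. length c = n - k}"
    unfolding SD Dspan lspan_def lbs by blast
  then show ?thesis unfolding kflats_def affine_dim_def
    using vn bsv lbs bs(2) by (intro CollectI exI[of _ v] exI[of _ bs]) simp
qed

lemma kflat_is_flat:
  assumes F: "F \<in> kflats n k" and kn: "k \<le> n"
  shows "\<exists>L e. set L \<subseteq> vecs n \<and> lin_indep n L \<and> length L = k \<and> length e = k \<and> F = aflat n L e"
proof -
  obtain v bs where v: "v \<in> vecs n" and bs: "set bs \<subseteq> vecs n" "length bs = n - k" "lin_indep n bs"
    and Fd: "F = {vadd v (lincomb n bs c) | c. length c = n - k}"
    using F unfolding kflats_def affine_dim_def by blast
  have vn: "length v = n" using v by simp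
  have FS: "F = vadd v ` lspan n bs" unfolding Fd lspan_def bs(2) by blast
  have sbs: "lspan n bs \<subseteq> vecs n" using span_subset_vecs[OF bs(1)] .
  have inj: "inj_on (vadd v) (lspan n bs)"
  proof (rule inj_onI)
    fix x y assume "x \<in> lspan n bs" "y \<in> lspan n bs" "vadd v x = vadd v y"
    then show "x = y" using vadd_left_inj[of v n x y] sbs vn by (auto simp: subset_iff)
  qed
  have cF: "card F = 2 ^ (n - k)" unfolding FS card_image[OF inj] card_span[OF bs(1,3)] bs(2) ..
  define A where "A = {l \<in> vecs n. \<forall>b\<in>set bs. \<not> ip l b}"
  have Av: "A \<subseteq> vecs n" unfolding A_def by blast
  obtain L where L: "set L \<subseteq> A" "lin_indep n L" "A \<subseteq> lspan n L" using max_indep[OF Av] by blast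
  have Lv: "set L \<subseteq> vecs n" using L(1) Av by blast
  define e where "e = map (\<lambda>l. ip l v) L"
  have le: "length e = length L" unfolding e_def by simp
  have Fsub: "F \<subseteq> aflat n L e"
  proof
    fix y assume "y \<in> F"
    then obtain s where s: "s \<in> lspan n bs" "y = vadd v s" using FS by blast
    then obtain c where c: "s = lincomb n bs c" unfolding lspan_def by blast
    have sn: "length s = n" using s sbs by (auto simp: subset_iff)
    show "y \<in> aflat n L e" unfolding aflat_def
    proof (intro CollectI conjI allI impI)
      show "y \<in> vecs n" using s sn vn by simp
      fix i assume i: "i < length L"
      have li: "length (L ! i) = n" using ip_nth_len[OF Lv i] .
      have LiA: "L ! i \<in> A" using L(1) i nth_mem by blast
      have "\<forall>b\<in>set bs. \<not> ip b (L ! i)"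
      proof
        fix b assume b: "b \<in> set bs"
        then have "length b = n" using bs(1) by auto
        then show "\<not> ip b (L ! i)" using LiA b ip_sym[of b "L ! i"] li unfolding A_def by auto
      qed
      then have "\<not> ip s (L ! i)" using ip_lincomb_zero[OF bs(1) li] c by blast
      then have "\<not> ip (L ! i) s" using ip_sym[of s "L ! i"] sn li by simp
      then show "ip (L ! i) y = e ! i" using ip_vadd2[OF li vn sn] s i unfolding e_def by simp
    qed
  qed
  have lLn: "length L \<le> n" using indep_length_le[OF Lv L(2)] .
  have cfl: "card (aflat n L e) = 2 ^ (n - length L)" using card_flat[OF Lv L(2) le] .
  have "card F \<le> card (aflat n L e)" using Fsub by (intro card_mono) auto
  then have "(2::nat) ^ (n - k) \<le> 2 ^ (n - length L)" using cF cfl by simp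
  then have "n - k \<le> n - length L" by simp
  then have lLk: "length L \<le> k" using kn lLn by linarith
  have "length L = k"
  proof (rule ccontr)
    assume "length L \<noteq> k"
    then have "length L < k" using lLk by simp
    then have "card F < card (aflat n L e)" using cF cfl kn lLn by simp
    then have "F \<noteq> aflat n L e" by auto
    then obtain y where y: "y \<in> aflat n L e" "y \<notin> F" using Fsub by blast
    have yn: "length y = n" using y(1) by (rule flat_length)
    let ?d = "vadd y v"
    have dn: "length ?d = n" using yn vn by simp
    have "?d \<notin> lspan n bs"
    proof
      assume "?d \<in> lspan n bs"
      moreover have "y = vadd v ?d" using vadd_cancel_left[of v y y] vn yn vadd_comm[of y v] by simp
      ultimately show False using y(2) FS by blast
    qed
    then obtain z where z: "z \<in> vecs n" "\<forall>b\<in>set bs. \<not> ip b z" "ip ?d z" using sep[OF bs(1) dn] by blast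
    have zn: "length z = n" using z by simp
    have "z \<in> A" unfolding A_def using z bs(1) ip_sym[of _ z] zn by (auto simp: subset_iff)
    then have "z \<in> lspan n L" using L(3) by blast
    then obtain c where c: "z = lincomb n L c" unfolding lspan_def by blast
    have "\<forall>l\<in>set L. \<not> ip l ?d"
    proof
      fix l assume l: "l \<in> set L"
      then obtain i where i: "i < length L" "l = L ! i" by (metis in_set_conv_nth)
      have li: "length l = n" using Lv l by auto
      have "ip l y = ip l v" using y(1) i unfolding aflat_def e_def by simp
      then show "\<not> ip l ?d" using ip_vadd2[OF li yn vn] by simp
    qed
    then have "\<not> ip z ?d" using ip_lincomb_zero[OF Lv dn] c by blast
    then show False using z(3) ip_sym[of z ?d] zn dn by simp
  qed
  moreover have "F = aflat n L e"
    using Fsub cF cfl calculation by (intro card_subset_eq) auto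
  ultimately show ?thesis using Lv L(2) le by blast
qed



locale fl =
  fixes n k :: nat and L0 :: "bool list list" and e0 y0 :: "bool list"
  assumes L0v: "set L0 \<subseteq> vecs n" and L0i: "lin_indep n L0" and L0k: "length L0 = k"
    and e0k: "length e0 = k" and y0F: "y0 \<in> aflat n L0 e0"
begin

abbreviation "F \<equiv> aflat n L0 e0"

lemma y0n: "length y0 = n" using y0F by (rule flat_length)

lemma kn: "k \<le> n" using indep_length_le[OF L0v L0i] L0k by simp

lemma cardF: "card F = 2 ^ (n - k)" using card_flat[OF L0v L0i] e0k L0k by simp

lemma e0_eq: "i < k \<Longrightarrow> e0 ! i = ip (L0 ! i) y0"
  using y0F L0k by (simp add: aflat_def)

lemma const_on_flat:
  assumes l: "l \<in> lspan n L0" and y: "y \<in> F"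
  shows "ip l y = ip l y0"
proof -
  have yn: "length y = n" using y by (rule flat_length)
  obtain c where c: "l = lincomb n L0 c" using l unfolding lspan_def by blast
  have ln: "length l = n" using l span_subset_vecs[OF L0v] by auto
  have d: "length (vadd y y0) = n" using yn y0n by simp
  have "\<forall>m\<in>set L0. \<not> ip m (vadd y y0)"
  proof
    fix m assume m: "m \<in> set L0"
    then obtain i where i: "i < length L0" "m = L0 ! i" by (metis in_set_conv_nth)
    have mn: "length m = n" using m L0v by auto
    have "ip m y = ip m y0" using y i y0F unfolding aflat_def by simp
    then show "\<not> ip m (vadd y y0)" using ip_vadd2[OF mn yn y0n] by simp
  qed
  then have "\<not> ip l (vadd y y0)" using ip_lincomb_zero[OF L0v d] c by blast
  then show ?thesis using ip_vadd2[OF ln yn y0n] by simp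
qed

lemma in_span_if_const:
  assumes l: "l \<in> vecs n" and H: "\<forall>y\<in>F. ip l y = ip l y0"
  shows "l \<in> lspan n L0"
proof (rule ccontr)
  assume nl: "l \<notin> lspan n L0"
  have s: "set (l # L0) \<subseteq> vecs n" using l L0v by simp
  have li: "lin_indep n (l # L0)" using lin_indep_Cons[OF s] L0i nl by simp
  have le: "Suc k \<le> n" using indep_length_le[OF s li] L0k by simp
  have "F \<subseteq> aflat n (l # L0) (ip l y0 # e0)" using H by (auto simp: flat_Cons)
  then have "card F \<le> card (aflat n (l # L0) (ip l y0 # e0))" by (intro card_mono) auto
  also have "\<dots> = 2 ^ (n - Suc k)" using card_flat[OF s li] e0k L0k by simp
  finally have "(2::nat) ^ (n - k) \<le> 2 ^ (n - Suc k)" using cardF by simp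
  then have "n - k \<le> n - Suc k" by simp
  then show False using le by simp
qed

lemma flat_eq_iff:
  assumes L: "set L \<subseteq> vecs n" "lin_indep n L" "length L = k" and e: "length e = k"
  shows "aflat n L e = F \<longleftrightarrow> set L \<subseteq> lspan n L0 \<and> e = map (\<lambda>l. ip l y0) L"
proof
  assume H: "aflat n L e = F"
  have ee: "e = map (\<lambda>l. ip l y0) L"
  proof (rule nth_equalityI)
    show "length e = length (map (\<lambda>l. ip l y0) L)" using e L by simp
    fix i assume "i < length e"
    then show "e ! i = map (\<lambda>l. ip l y0) L ! i" using y0F H e L(3) unfolding aflat_def by auto
  qed
  have "set L \<subseteq> lspan n L0"
  proof
    fix l assume l: "l \<in> set L"
    then obtain i where i: "i < length L" "l = L ! i" by (metis in_set_conv_nth)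
    have "\<forall>y\<in>F. ip l y = ip l y0"
    proof
      fix y assume "y \<in> F"
      then have "ip l y = e ! i" using H i unfolding aflat_def by auto
      then show "ip l y = ip l y0" using ee i by simp
    qed
    then show "l \<in> lspan n L0" using in_span_if_const l L(1) by blast
  qed
  then show "set L \<subseteq> lspan n L0 \<and> e = map (\<lambda>l. ip l y0) L" using ee by simp
next
  assume H: "set L \<subseteq> lspan n L0 \<and> e = map (\<lambda>l. ip l y0) L"
  have sub: "F \<subseteq> aflat n L e"
  proof
    fix y assume y: "y \<in> F"
    show "y \<in> aflat n L e" unfolding aflat_def
    proof (intro CollectI conjI allI impI)
      show "y \<in> vecs n" using y flat_subset by blast
      fix i assume i: "i < length L"
      have "L ! i \<in> lspan n L0" using H i nth_mem by blast
      then show "ip (L ! i) y = e ! i" using const_on_flat[OF _ y] H i by simp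
    qed
  qed
  have "card (aflat n L e) = 2 ^ (n - k)" using card_flat[OF L(1,2)] e L(3) by simp
  then show "aflat n L e = F" using sub cardF by (intro card_subset_eq[symmetric]) auto
qed

end

lemma count_ext:
  assumes W: "W \<subseteq> vecs n" "\<And>xs. set xs \<subseteq> W \<Longrightarrow> lspan n xs \<subseteq> W"
    and s: "set s \<subseteq> W" "lin_indep n s"
  shows "card {gs. length gs = j \<and> set gs \<subseteq> W \<and> lin_indep n (gs @ s)} = (\<Prod>i<j. card W - 2 ^ (length s + i))"
proof (induction j)
  case 0
  have "{gs. length gs = 0 \<and> set gs \<subseteq> W \<and> lin_indep n (gs @ s)} = {[]}" using s by auto
  then show ?case by simp
next
  case (Suc j)
  let ?G = "\<lambda>j. {gs. length gs = j \<and> set gs \<subseteq> W \<and> lin_indep n (gs @ s)}"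
  have finW: "finite W" using finite_subset[OF W(1) finite_vecs] .
  have finG: "finite (?G j)"
    by (rule finite_subset[of _ "{xs. set xs \<subseteq> W \<and> length xs = j}"]) (auto intro: finite_lists_length_eq[OF finW])
  have eq: "?G (Suc j) = (\<lambda>(gs, g). g # gs) ` (SIGMA gs:?G j. W - lspan n (gs @ s))"
  proof (intro equalityI subsetI)
    fix xs assume xs: "xs \<in> ?G (Suc j)"
    then obtain g gs where g: "xs = g # gs" "length gs = j" by (cases xs) auto
    have sv: "set (g # gs @ s) \<subseteq> vecs n" using xs g s W(1) by auto
    have "lin_indep n (g # gs @ s)" using xs g by simp
    then have "lin_indep n (gs @ s)" "g \<notin> lspan n (gs @ s)" using lin_indep_Cons[OF sv] by auto
    then have "(gs, g) \<in> (SIGMA gs:?G j. W - lspan n (gs @ s))" using xs g by auto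
    then show "xs \<in> (\<lambda>(gs, g). g # gs) ` (SIGMA gs:?G j. W - lspan n (gs @ s))" using g by force
  next
    fix xs assume "xs \<in> (\<lambda>(gs, g). g # gs) ` (SIGMA gs:?G j. W - lspan n (gs @ s))"
    then obtain g gs where g: "xs = g # gs" "gs \<in> ?G j" "g \<in> W" "g \<notin> lspan n (gs @ s)" by auto
    have sv: "set (g # gs @ s) \<subseteq> vecs n" using g s W(1) by auto
    have "lin_indep n (g # gs @ s)" using lin_indep_Cons[OF sv] g by auto
    then show "xs \<in> ?G (Suc j)" using g by auto
  qed
  have inj: "inj_on (\<lambda>(gs, g). g # gs) (SIGMA gs:?G j. W - lspan n (gs @ s))"
    by (rule inj_onI) auto
  have cd: "card (W - lspan n (gs @ s)) = card W - 2 ^ (length s + j)" if gs: "gs \<in> ?G j" for gs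
  proof -
    have sv: "set (gs @ s) \<subseteq> W" using gs s by auto
    have sub: "lspan n (gs @ s) \<subseteq> W" using W(2)[OF sv] .
    have "card (lspan n (gs @ s)) = 2 ^ (length s + j)"
      using card_span[of "gs @ s" n] sv W(1) gs by (auto simp: add.commute)
    then show ?thesis using card_Diff_subset[OF finite_subset[OF sub finW] sub] by simp
  qed
  have "card (?G (Suc j)) = card (SIGMA gs:?G j. W - lspan n (gs @ s))"
    unfolding eq by (rule card_image[OF inj])
  also have "\<dots> = (\<Sum>gs\<in>?G j. card (W - lspan n (gs @ s)))"
    by (rule card_SigmaI[OF finG]) (use finW in auto)
  also have "\<dots> = (\<Sum>gs\<in>?G j. card W - 2 ^ (length s + j))"
    by (rule sum.cong) (auto simp: cd)
  also have "\<dots> = card (?G j) * (card W - 2 ^ (length s + j))" by simp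
  also have "\<dots> = (\<Prod>i<Suc j. card W - 2 ^ (length s + i))" using Suc.IH by simp
  finally show ?case .
qed



definition Gs :: "nat \<Rightarrow> nat \<Rightarrow> bool list \<Rightarrow> bool list list set" where
  "Gs n k a = {gs. length gs = k - 1 \<and> set gs \<subseteq> vecs n \<and> lin_indep n (gs @ [a])}"

definition Bs :: "nat \<Rightarrow> bool list set" where
  "Bs k = {bs. length bs = k - 1}"

definition Nf :: "nat \<Rightarrow> nat \<Rightarrow> bool list \<Rightarrow> bool \<Rightarrow> bool list set \<Rightarrow> nat" where
  "Nf n k a c F = card {p \<in> Gs n k a \<times> Bs k. aflat n (fst p @ [a]) (snd p @ [c]) = F}"

lemma indep_single: "a \<in> vecs n \<Longrightarrow> a \<noteq> zerov n \<Longrightarrow> lin_indep n [a]"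
  using lin_indep_Cons[of a "[]" n] by simp

lemma card_Gs:
  assumes "a \<in> vecs n" "a \<noteq> zerov n"
  shows "card (Gs n k a) = (\<Prod>i<k - 1. 2 ^ n - 2 ^ (1 + i))"
proof -
  have "card (Gs n k a) = (\<Prod>i<k - 1. card (vecs n) - 2 ^ (length [a] + i))"
    unfolding Gs_def
    by (rule count_ext) (use assms indep_single span_subset_vecs in auto)
  then show ?thesis by (simp add: card_vecs)
qed

lemma finite_Gs: "finite (Gs n k a)"
  by (rule finite_subset[of _ "{xs. set xs \<subseteq> vecs n \<and> length xs = k - 1}"])
     (auto simp: Gs_def intro: finite_lists_length_eq)

lemma finite_Bs: "finite (Bs k)"
  using finite_lists_length_eq[of "UNIV :: bool set" "k - 1"] by (simp add: Bs_def)

lemma card_Bs: "card (Bs k) = 2 ^ (k - 1)"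
  using card_lists_length_eq[of "UNIV :: bool set" "k - 1"] by (simp add: Bs_def)

lemma Nf_not_kflat:
  assumes "F \<notin> kflats n k" "1 \<le> k" "a \<in> vecs n"
  shows "Nf n k a c F = 0"
proof -
  have "{p \<in> Gs n k a \<times> Bs k. aflat n (fst p @ [a]) (snd p @ [c]) = F} = {}"
  proof (rule ccontr)
    assume "{p \<in> Gs n k a \<times> Bs k. aflat n (fst p @ [a]) (snd p @ [c]) = F} \<noteq> {}"
    then obtain gs bs where p: "gs \<in> Gs n k a" "bs \<in> Bs k" "aflat n (gs @ [a]) (bs @ [c]) = F" by auto
    have "aflat n (gs @ [a]) (bs @ [c]) \<in> kflats n k"
      by (rule flat_in_kflats) (use p assms in \<open>auto simp: Gs_def Bs_def\<close>)
    then show False using p assms by simp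
  qed
  then show ?thesis unfolding Nf_def by (simp only: card.empty)
qed

context fl
begin

lemma card_span0: "card (lspan n L0) = 2 ^ k"
  using card_span[OF L0v L0i] L0k by simp

lemma Nf_eq:
  assumes k1: "1 \<le> k" and a: "a \<in> vecs n" "a \<noteq> zerov n"
  shows "Nf n k a c F = (if a \<in> lspan n L0 \<and> c = ip a y0 then (\<Prod>i<k - 1. 2 ^ k - 2 ^ (1 + i)) else 0)"
proof -
  let ?T = "{p \<in> Gs n k a \<times> Bs k. aflat n (fst p @ [a]) (snd p @ [c]) = F}"
  let ?f = "\<lambda>l. ip l y0"
  have key: "aflat n (gs @ [a]) (bs @ [c]) = F \<longleftrightarrow> a \<in> lspan n L0 \<and> set gs \<subseteq> lspan n L0 \<and> c = ip a y0 \<and> bs = map ?f gs"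
    if p: "gs \<in> Gs n k a" "bs \<in> Bs k" for gs bs
  proof -
    have "aflat n (gs @ [a]) (bs @ [c]) = F \<longleftrightarrow> set (gs @ [a]) \<subseteq> lspan n L0 \<and> bs @ [c] = map ?f (gs @ [a])"
      by (rule flat_eq_iff) (use p a k1 in \<open>auto simp: Gs_def Bs_def\<close>)
    then show ?thesis by auto
  qed
  show ?thesis
  proof (cases "a \<in> lspan n L0 \<and> c = ip a y0")
    case True
    let ?G' = "{gs. length gs = k - 1 \<and> set gs \<subseteq> lspan n L0 \<and> lin_indep n (gs @ [a])}"
    have "?T = (\<lambda>gs. (gs, map ?f gs)) ` ?G'"
    proof (intro equalityI subsetI)
      fix p assume p: "p \<in> ?T"
      obtain gs bs where gb: "p = (gs, bs)" by (cases p)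
      have "gs \<in> Gs n k a" "bs \<in> Bs k" using p gb by auto
      moreover then have "set gs \<subseteq> lspan n L0 \<and> bs = map ?f gs" using key p gb by auto
      ultimately show "p \<in> (\<lambda>gs. (gs, map ?f gs)) ` ?G'" using gb by (auto simp: Gs_def)
    next
      fix p assume "p \<in> (\<lambda>gs. (gs, map ?f gs)) ` ?G'"
      then obtain gs where gs: "gs \<in> ?G'" "p = (gs, map ?f gs)" by blast
      have gsv: "set gs \<subseteq> vecs n" using gs span_subset_vecs[OF L0v] by auto
      have G: "gs \<in> Gs n k a" using gs gsv by (auto simp: Gs_def)
      have B: "map ?f gs \<in> Bs k" using gs by (auto simp: Bs_def)
      show "p \<in> ?T" using key[OF G B] True gs G B by auto
    qed
    moreover have "inj_on (\<lambda>gs. (gs, map ?f gs)) ?G'" by (rule inj_onI) auto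
    ultimately have "card ?T = card ?G'" by (simp add: card_image)
    also have "\<dots> = (\<Prod>i<k - 1. card (lspan n L0) - 2 ^ (length [a] + i))"
      by (rule count_ext)
         (use True a span_subset_vecs[OF L0v] span_mono_span[OF L0v] indep_single in auto)
    finally show ?thesis using True card_span0 unfolding Nf_def by simp
  next
    case False
    then have e: "?T = {}" using key by auto
    have nf0: "Nf n k a c F = 0" unfolding Nf_def by (simp only: e card.empty)
    show ?thesis unfolding if_not_P[OF False] by (rule nf0)
  qed
qed

lemma alpha:
  assumes k1: "1 \<le> k" and x: "x \<in> vecs n"
  shows "card {a \<in> lspan n L0. ip a y0 \<noteq> ip a x} = (if x \<in> F then 0 else 2 ^ (k - 1))"
proof (cases "x \<in> F")
  case True
  then have e: "{a \<in> lspan n L0. ip a y0 \<noteq> ip a x} = {}" using const_on_flat by auto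
  have "card {a \<in> lspan n L0. ip a y0 \<noteq> ip a x} = 0" by (simp only: e card.empty)
  with True show ?thesis by simp
next
  case False
  have xn: "length x = n" using x by simp
  have "\<exists>a0\<in>lspan n L0. ip a0 y0 \<noteq> ip a0 x"
  proof (rule ccontr)
    assume "\<not> ?thesis"
    then have H: "\<forall>a\<in>lspan n L0. ip a y0 = ip a x" by blast
    have "x \<in> F" unfolding aflat_def
    proof (intro CollectI conjI allI impI)
      show "x \<in> vecs n" using x .
      fix i assume i: "i < length L0"
      have "L0 ! i \<in> lspan n L0" using in_span_self[of "L0 ! i" L0 n] L0v i nth_mem by blast
      then have "ip (L0 ! i) x = ip (L0 ! i) y0" using H by simp
      then show "ip (L0 ! i) x = e0 ! i" using e0_eq i L0k by simp
    qed
    then show False using False by simp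
  qed
  then obtain a0 where a0: "a0 \<in> lspan n L0" "ip a0 y0 \<noteq> ip a0 x" by blast
  have sv: "lspan n L0 \<subseteq> vecs n" using span_subset_vecs[OF L0v] .
  have a0n: "length a0 = n" using a0 sv by auto
  let ?P = "{a \<in> lspan n L0. ip a y0 \<noteq> ip a x}" and ?Q = "{a \<in> lspan n L0. ip a y0 = ip a x}"
  have img: "vadd a0 ` ?Q = ?P"
  proof (intro equalityI subsetI)
    fix b assume "b \<in> vadd a0 ` ?Q"
    then obtain a where a: "a \<in> ?Q" "b = vadd a0 a" by blast
    have an: "length a = n" using a sv by auto
    have "vadd a0 a \<in> lspan n L0" using span_vadd_closed[OF L0v a0(1)] a by auto
    moreover have "ip (vadd a0 a) y0 \<noteq> ip (vadd a0 a) x"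
      using ip_vadd1[OF a0n an y0n] ip_vadd1[OF a0n an xn] a a0 by auto
    ultimately show "b \<in> ?P" using a by simp
  next
    fix b assume b: "b \<in> ?P"
    have bn: "length b = n" using b sv by auto
    have "vadd a0 b \<in> lspan n L0" using span_vadd_closed[OF L0v a0(1)] b by auto
    moreover have "ip (vadd a0 b) y0 = ip (vadd a0 b) x"
      using ip_vadd1[OF a0n bn y0n] ip_vadd1[OF a0n bn xn] b a0 by auto
    moreover have "b = vadd a0 (vadd a0 b)" using vadd_cancel_left[of a0 b b] a0n bn by simp
    ultimately show "b \<in> vadd a0 ` ?Q" by blast
  qed
  have inj: "inj_on (vadd a0) ?Q"
  proof (rule inj_onI)
    fix u v assume "u \<in> ?Q" "v \<in> ?Q" "vadd a0 u = vadd a0 v"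
    then show "u = v" using vadd_left_inj[of a0 n u v] sv a0n by (auto simp: subset_iff)
  qed
  have cPQ: "card ?P = card ?Q" using card_image[OF inj] img by simp
  have fin: "finite (lspan n L0)" using finite_subset[OF sv finite_vecs] .
  have "card (?P \<union> ?Q) = card ?P + card ?Q" by (rule card_Un_disjoint) (use fin in auto)
  moreover have "?P \<union> ?Q = lspan n L0" by auto
  ultimately have "card ?P * 2 = 2 ^ k" using cPQ card_span0 by simp
  moreover have "(2::nat) ^ k = 2 ^ (k - 1) * 2" using k1 by (metis Suc_diff_le diff_Suc_1 power_Suc2)
  ultimately show ?thesis using False by simp
qed

end



lemma permutes_all_iff:
  assumes "\<sigma> permutes {..<k}"
  shows "(\<forall>i<k. P (\<sigma> i)) \<longleftrightarrow> (\<forall>i<k. P i)"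
proof -
  have "(\<forall>i<k. P (\<sigma> i)) \<longleftrightarrow> (\<forall>j\<in>\<sigma> ` {..<k}. P j)" by auto
  also have "\<sigma> ` {..<k} = {..<k}" using permutes_image[OF assms] .
  finally show ?thesis by auto
qed

lemma flat_of_eq:
  assumes k1: "1 \<le> k" and G: "Gs n k a \<noteq> {}"
  shows "flat_of n k a b = bind_pmf (pmf_of_set (Gs n k a)) (\<lambda>gs. bind_pmf (pmf_of_set (Bs k)) (\<lambda>bs.
            return_pmf (aflat n (gs @ [a]) (bs @ [\<not> b]))))"
proof -
  have P: "{\<sigma>. \<sigma> permutes {..<k}} \<noteq> {}" "finite {\<sigma>. \<sigma> permutes {..<k}}"
  proof -
    have "id \<in> {\<sigma>. \<sigma> permutes {..<k}}" by (simp add: permutes_id)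
    then show "{\<sigma>. \<sigma> permutes {..<k}} \<noteq> {}" by blast
    show "finite {\<sigma>. \<sigma> permutes {..<k}}" using finite_permutations[of "{..<k}"] by simp
  qed
  have B: "Bs k \<noteq> {}" "finite (Bs k)" using finite_Bs card_Bs[of k] by (auto simp del: Bs_def)
  have fG: "finite (Gs n k a)" by (rule finite_Gs)
  show ?thesis
    unfolding flat_of_def Let_def Gs_def[symmetric] Bs_def[symmetric]
    apply (rule bind_pmf_cong[OF refl])+
    apply (rule trans[OF _ bind_pmf_const[of "pmf_of_set {\<sigma>. \<sigma> permutes {..<k}}"]])
    apply (rule bind_pmf_cong[OF refl])
    subgoal premises prems for gs bs \<sigma>
    proof -
      have gs': "length gs = k - 1" using prems set_pmf_of_set[OF G fG] by (auto simp: Gs_def)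
      have sp: "\<sigma> permutes {..<k}" using prems set_pmf_of_set[OF P] by auto
      have "{y \<in> vecs n. \<forall>i<k. ip ((gs @ [a]) ! \<sigma> i) y = (bs @ [\<not> b]) ! \<sigma> i} =
            {y \<in> vecs n. \<forall>i<k. ip ((gs @ [a]) ! i) y = (bs @ [\<not> b]) ! i}"
        using permutes_all_iff[OF sp, of "\<lambda>i. ip ((gs @ [a]) ! i) _ = (bs @ [\<not> b]) ! i"] by blast
      also have "\<dots> = aflat n (gs @ [a]) (bs @ [\<not> b])" unfolding aflat_def using gs' k1 by simp
      finally show ?thesis by simp
    qed
    done
qed



lemma pmf_eq_uniformI:
  fixes p :: "'a pmf"
  assumes fin: "finite S" and H: "\<And>x. pmf p x = (if x \<in> S then c else 0)"
  shows "p = pmf_of_set S"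
proof -
  have sp: "set_pmf p \<subseteq> S"
  proof
    fix x assume "x \<in> set_pmf p"
    then have "pmf p x \<noteq> 0" by (simp add: set_pmf_iff)
    then show "x \<in> S" using H[of x] by (auto split: if_splits)
  qed
  have ne: "S \<noteq> {}" using sp set_pmf_not_empty[of p] by blast
  have "(\<Sum>x\<in>S. pmf p x) = 1" by (rule sum_pmf_eq_1[OF fin sp])
  then have "real (card S) * c = 1" using H by simp
  moreover have "card S > 0" using fin ne by (simp add: card_gt_0_iff)
  ultimately have c: "c = 1 / real (card S)" by (simp add: field_simps)
  show ?thesis
  proof (rule pmf_eqI)
    fix x show "pmf p x = pmf (pmf_of_set S) x"
      using H[of x] c ne fin by (simp add: indicator_def)
  qed
qed

lemma sum_indicator_card:
  assumes "finite B"
  shows "(\<Sum>y\<in>B. (indicator {F} (f y) :: real)) = real (card {y \<in> B. f y = F})"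
proof -
  have "(\<Sum>y\<in>B. (indicator {F} (f y) :: real)) = (\<Sum>y\<in>B. if f y = F then 1 else 0)"
    by (rule sum.cong) (auto simp: indicator_def)
  also have "\<dots> = (\<Sum>y\<in>{y \<in> B. f y = F}. 1)" using sum.inter_filter[OF assms, of "\<lambda>_. (1::real)"] by simp
  also have "\<dots> = real (card {y \<in> B. f y = F})" by simp
  finally show ?thesis .
qed

lemma pmf_bind2:
  assumes A: "finite A" "A \<noteq> {}" and B: "finite B" "B \<noteq> {}"
  shows "pmf (bind_pmf (pmf_of_set A) (\<lambda>x. bind_pmf (pmf_of_set B) (\<lambda>y. return_pmf (f x y)))) F =
         real (card {p \<in> A \<times> B. f (fst p) (snd p) = F}) / (real (card A) * real (card B))"
proof -
  have inner: "pmf (bind_pmf (pmf_of_set B) (\<lambda>y. return_pmf (f x y))) F = real (card {y \<in> B. f x y = F}) / real (card B)" for x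
    using B by (simp add: pmf_bind integral_pmf_of_set sum_indicator_card)
  have "pmf (bind_pmf (pmf_of_set A) (\<lambda>x. bind_pmf (pmf_of_set B) (\<lambda>y. return_pmf (f x y)))) F =
        (\<Sum>x\<in>A. real (card {y \<in> B. f x y = F})) / (real (card A) * real (card B))"
    unfolding pmf_bind[of "pmf_of_set A"] using A by (simp add: integral_pmf_of_set inner)
  also have "\<dots> = real (\<Sum>x\<in>A. card {y \<in> B. f x y = F}) / (real (card A) * real (card B))"
    by simp
  also have "(\<Sum>x\<in>A. card {y \<in> B. f x y = F}) = card (SIGMA x:A. {y \<in> B. f x y = F})"
    using A B by (simp add: card_SigmaI)
  also have "(SIGMA x:A. {y \<in> B. f x y = F}) = {p \<in> A \<times> B. f (fst p) (snd p) = F}" by auto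
  finally show ?thesis .
qed

definition MG :: "nat \<Rightarrow> nat \<Rightarrow> nat" where
  "MG n k = (\<Prod>i<k - 1. 2 ^ n - 2 ^ (1 + i))"

lemma MG_pos: "k \<le> n \<Longrightarrow> MG n k > 0"
proof -
  assume kn: "k \<le> n"
  have "(2::nat) ^ (1 + i) < 2 ^ n" if "i < k - 1" for i
    using that kn by (intro power_strict_increasing) auto
  then show ?thesis unfolding MG_def by (intro prod_pos) auto
qed

lemma pmf_flat_of:
  assumes k1: "1 \<le> k" and kn: "k \<le> n" and a: "a \<in> vecs n" "a \<noteq> zerov n"
  shows "pmf (flat_of n k a b) F = real (Nf n k a (\<not> b) F) / (real (MG n k) * 2 ^ (k - 1))"
proof -
  have cG: "card (Gs n k a) = MG n k" using card_Gs[OF a] unfolding MG_def .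
  then have G: "Gs n k a \<noteq> {}" using MG_pos[OF kn] by auto
  have B: "Bs k \<noteq> {}" using card_Bs[of k] by auto
  show ?thesis
    unfolding flat_of_eq[OF k1 G] pmf_bind2[OF finite_Gs G finite_Bs B] Nf_def
    using cG card_Bs[of k] by simp
qed

lemma nz_facts:
  assumes "1 \<le> n"
  shows "finite (nonzero_vecs n)" "nonzero_vecs n \<noteq> {}" "card (nonzero_vecs n) = 2 ^ n - 1"
proof -
  show "finite (nonzero_vecs n)" unfolding nonzero_vecs_def by simp
  have "True # replicate (n - 1) False \<in> nonzero_vecs n"
    using assms by (cases n) (auto simp: nonzero_vecs_def zerov_def)
  then show "nonzero_vecs n \<noteq> {}" by blast
  have "zerov n \<in> vecs n" by simp
  then show "card (nonzero_vecs n) = 2 ^ n - 1"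
    unfolding nonzero_vecs_def by (simp add: card_Diff_singleton card_vecs)
qed

lemma pmf_mix:
  assumes k1: "1 \<le> k" and kn: "k \<le> n"
  shows "pmf (bind_pmf (pmf_of_set (nonzero_vecs n)) (\<lambda>a. bind_pmf (q a) (\<lambda>b. flat_of n k a (h a b)))) F =
    (\<Sum>a\<in>nonzero_vecs n. (\<integral>b. real (Nf n k a (\<not> h a b) F) \<partial>q a))
       / (real (2 ^ n - 1) * real (MG n k) * 2 ^ (k - 1))"
proof -
  have n1: "1 \<le> n" using k1 kn by simp
  note nz = nz_facts[OF n1]
  have inner: "pmf (bind_pmf (q a) (\<lambda>b. flat_of n k a (h a b))) F =
      (\<integral>b. real (Nf n k a (\<not> h a b) F) \<partial>q a) / (real (MG n k) * 2 ^ (k - 1))" if a: "a \<in> nonzero_vecs n" for a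
  proof -
    have a': "a \<in> vecs n" "a \<noteq> zerov n" using a by (auto simp: nonzero_vecs_def)
    have "pmf (bind_pmf (q a) (\<lambda>b. flat_of n k a (h a b))) F = (\<integral>b. pmf (flat_of n k a (h a b)) F \<partial>q a)"
      by (rule pmf_bind)
    also have "\<dots> = (\<integral>b. real (Nf n k a (\<not> h a b) F) / (real (MG n k) * 2 ^ (k - 1)) \<partial>q a)"
      by (rule Bochner_Integration.integral_cong[OF refl]) (simp add: pmf_flat_of[OF k1 kn a'])
    also have "\<dots> = (\<integral>b. real (Nf n k a (\<not> h a b) F) \<partial>q a) / (real (MG n k) * 2 ^ (k - 1))"
      by simp
    finally show ?thesis .
  qed
  have "pmf (bind_pmf (pmf_of_set (nonzero_vecs n)) (\<lambda>a. bind_pmf (q a) (\<lambda>b. flat_of n k a (h a b)))) F =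
     (\<Sum>a\<in>nonzero_vecs n. pmf (bind_pmf (q a) (\<lambda>b. flat_of n k a (h a b))) F) / real (card (nonzero_vecs n))"
    using nz by (simp add: pmf_bind integral_pmf_of_set)
  also have "\<dots> = (\<Sum>a\<in>nonzero_vecs n. (\<integral>b. real (Nf n k a (\<not> h a b) F) \<partial>q a) / (real (MG n k) * 2 ^ (k - 1)))
       / real (card (nonzero_vecs n))"
    by (simp add: inner)
  also have "\<dots> = (\<Sum>a\<in>nonzero_vecs n. (\<integral>b. real (Nf n k a (\<not> h a b) F) \<partial>q a))
       / (real (2 ^ n - 1) * real (MG n k) * 2 ^ (k - 1))"
    using nz by (simp add: sum_divide_distrib[symmetric] field_simps)
  finally show ?thesis .
qed



definition PP :: "nat \<Rightarrow> nat" where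
  "PP k = (\<Prod>i<k - 1. 2 ^ k - 2 ^ (1 + i))"

context fl
begin

lemma Nf_eq': "1 \<le> k \<Longrightarrow> a \<in> nonzero_vecs n \<Longrightarrow>
  Nf n k a c F = (if a \<in> lspan n L0 \<and> c = ip a y0 then PP k else 0)"
  using Nf_eq[of a c] unfolding PP_def nonzero_vecs_def by auto

lemma sum_if_card:
  assumes "finite A"
  shows "(\<Sum>a\<in>A. real (if P a then m else 0)) = real m * real (card {a \<in> A. P a})"
proof -
  have "(\<Sum>a\<in>A. real (if P a then m else 0)) = (\<Sum>a\<in>A. if P a then real m else 0)"
    by (rule sum.cong) auto
  also have "\<dots> = (\<Sum>a\<in>{a \<in> A. P a}. real m)" by (rule sum.inter_filter[OF assms, symmetric])
  finally show ?thesis by (simp add: mult.commute)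
qed

lemma sum_Nf_both:
  assumes k1: "1 \<le> k"
  shows "(\<Sum>a\<in>nonzero_vecs n. real (Nf n k a c F) + real (Nf n k a (\<not> c) F)) = real (PP k) * real (2 ^ k - 1)"
proof -
  have fin: "finite (nonzero_vecs n)" unfolding nonzero_vecs_def by simp
  have "(\<Sum>a\<in>nonzero_vecs n. real (Nf n k a c F) + real (Nf n k a (\<not> c) F)) =
        (\<Sum>a\<in>nonzero_vecs n. real (if a \<in> lspan n L0 then PP k else 0))"
    by (rule sum.cong[OF refl]) (auto simp: Nf_eq'[OF k1])
  also have "\<dots> = real (PP k) * real (card {a \<in> nonzero_vecs n. a \<in> lspan n L0})"
    by (rule sum_if_card[OF fin])
  also have "{a \<in> nonzero_vecs n. a \<in> lspan n L0} = lspan n L0 - {zerov n}"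
    using span_subset_vecs[OF L0v] unfolding nonzero_vecs_def by auto
  also have "card (lspan n L0 - {zerov n}) = 2 ^ k - 1"
    using card_span0 zero_in_span[of n L0] by (simp add: card_Diff_singleton)
  finally show ?thesis .
qed

lemma sum_Nf_x:
  assumes k1: "1 \<le> k" and x: "x \<in> vecs n"
  shows "(\<Sum>a\<in>nonzero_vecs n. real (Nf n k a (\<not> ip a x) F)) = real (PP k) * real (if x \<in> F then 0 else 2 ^ (k - 1))"
proof -
  have fin: "finite (nonzero_vecs n)" unfolding nonzero_vecs_def by simp
  have "(\<Sum>a\<in>nonzero_vecs n. real (Nf n k a (\<not> ip a x) F)) =
        (\<Sum>a\<in>nonzero_vecs n. real (if a \<in> lspan n L0 \<and> (\<not> ip a x) = ip a y0 then PP k else 0))"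
    by (rule sum.cong[OF refl]) (simp add: Nf_eq'[OF k1])
  also have "\<dots> = real (PP k) * real (card {a \<in> nonzero_vecs n. a \<in> lspan n L0 \<and> (\<not> ip a x) = ip a y0})"
    by (rule sum_if_card[OF fin])
  also have "{a \<in> nonzero_vecs n. a \<in> lspan n L0 \<and> (\<not> ip a x) = ip a y0} = {a \<in> lspan n L0. ip a y0 \<noteq> ip a x}"
    using span_subset_vecs[OF L0v] unfolding nonzero_vecs_def by auto
  also have "card {a \<in> lspan n L0. ip a y0 \<noteq> ip a x} = (if x \<in> F then 0 else 2 ^ (k - 1))"
    by (rule alpha[OF k1 x])
  finally show ?thesis .
qed

end

lemma kflat_fl:
  assumes "F \<in> kflats n k" "k \<le> n"
  shows "\<exists>L0 e0 y0. fl n k L0 e0 y0 \<and> F = aflat n L0 e0"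
proof -
  obtain L0 e0 where L: "set L0 \<subseteq> vecs n" "lin_indep n L0" "length L0 = k" "length e0 = k" "F = aflat n L0 e0"
    using kflat_is_flat[OF assms] by blast
  have "card (aflat n L0 e0) = 2 ^ (n - k)" using card_flat[OF L(1,2)] L by simp
  then have "aflat n L0 e0 \<noteq> {}" by (metis card.empty power_not_zero zero_neq_numeral)
  then obtain y0 where "y0 \<in> aflat n L0 e0" by blast
  then have "fl n k L0 e0 y0" using L by unfold_locales auto
  then show ?thesis using L by blast
qed

lemma finite_kflats: "k \<le> n \<Longrightarrow> finite (kflats n k)"
proof -
  assume kn: "k \<le> n"
  have "kflats n k \<subseteq> Pow (vecs n)"
    using kflat_is_flat[OF _ kn] flat_subset by blast
  then show ?thesis by (rule finite_subset) simp
qed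

definition DD :: "nat \<Rightarrow> nat \<Rightarrow> real" where
  "DD n k = real (2 ^ n - 1) * real (MG n k) * 2 ^ (k - 1)"

lemma pmf_Q1:
  assumes k1: "1 \<le> k" and kn: "k \<le> n"
  shows "pmf (bind_pmf (pmf_of_set (nonzero_vecs n)) (\<lambda>a. bind_pmf (pmf_of_set UNIV) (\<lambda>b. flat_of n k a b))) F =
    (\<Sum>a\<in>nonzero_vecs n. real (Nf n k a c F) + real (Nf n k a (\<not> c) F)) / (2 * DD n k)"
proof -
  have i: "(\<integral>b. real (Nf n k a (\<not> b) F) \<partial>pmf_of_set UNIV) = (real (Nf n k a c F) + real (Nf n k a (\<not> c) F)) / 2" for a
    by (cases c) (simp_all add: integral_pmf_of_set UNIV_bool)
  show ?thesis
    unfolding pmf_mix[OF k1 kn, of "\<lambda>_. pmf_of_set UNIV" "\<lambda>a b. b"] i DD_def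
    by (simp add: sum_divide_distrib[symmetric])
qed

lemma pmf_Q1_val:
  assumes k1: "1 \<le> k" and kn: "k \<le> n"
  shows "pmf (bind_pmf (pmf_of_set (nonzero_vecs n)) (\<lambda>a. bind_pmf (pmf_of_set UNIV) (\<lambda>b. flat_of n k a b))) F =
    (if F \<in> kflats n k then real (PP k) * real (2 ^ k - 1) / (2 * DD n k) else 0)"
proof (cases "F \<in> kflats n k")
  case True
  then obtain L0 e0 y0 where f: "fl n k L0 e0 y0" "F = aflat n L0 e0" using kflat_fl[OF _ kn] by blast
  show ?thesis unfolding pmf_Q1[OF k1 kn, of _ True] f(2) fl.sum_Nf_both[OF f(1) k1] using True f by simp
next
  case False
  have "Nf n k a c F = 0" if "a \<in> nonzero_vecs n" for a c
    using Nf_not_kflat[OF False k1] that unfolding nonzero_vecs_def by simp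
  then show ?thesis unfolding pmf_Q1[OF k1 kn, of _ True] using False by simp
qed

lemma single_unif:
  assumes k1: "1 \<le> k" and kn: "k \<le> n"
  shows "bind_pmf (pmf_of_set (nonzero_vecs n)) (\<lambda>a. bind_pmf (pmf_of_set UNIV) (\<lambda>b. flat_of n k a b)) = q0 n k"
  unfolding q0_def by (rule pmf_eq_uniformI[OF finite_kflats[OF kn] pmf_Q1_val[OF k1 kn]])

lemma pmf_Qx:
  assumes k1: "1 \<le> k" and kn: "k \<le> n"
  shows "pmf (bind_pmf (pmf_of_set (nonzero_vecs n)) (\<lambda>a. flat_of n k a (ip a x))) F =
    (\<Sum>a\<in>nonzero_vecs n. real (Nf n k a (\<not> ip a x) F)) / DD n k"
proof -
  have eq: "bind_pmf (pmf_of_set (nonzero_vecs n)) (\<lambda>a. flat_of n k a (ip a x)) =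
        bind_pmf (pmf_of_set (nonzero_vecs n)) (\<lambda>a. bind_pmf (return_pmf ()) (\<lambda>b. flat_of n k a (ip a x)))"
    by (simp add: bind_return_pmf)
  have "pmf (bind_pmf (pmf_of_set (nonzero_vecs n)) (\<lambda>a. bind_pmf (return_pmf ()) (\<lambda>b. flat_of n k a (ip a x)))) F
      = (\<Sum>a\<in>nonzero_vecs n. real (Nf n k a (\<not> ip a x) F)) / DD n k"
    unfolding pmf_mix[OF k1 kn, of "\<lambda>_. return_pmf ()" "\<lambda>a b. ip a x"] DD_def by simp
  then show ?thesis unfolding eq .
qed

lemma single_x:
  assumes k1: "1 \<le> k" and kn: "k \<le> n" and x: "x \<in> vecs n"
  shows "bind_pmf (pmf_of_set (nonzero_vecs n)) (\<lambda>a. flat_of n k a (ip a x)) = qx n k x"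
  unfolding qx_def
proof (rule pmf_eq_uniformI)
  show "finite {S \<in> kflats n k. x \<notin> S}" using finite_kflats[OF kn] by simp
  fix F
  show "pmf (bind_pmf (pmf_of_set (nonzero_vecs n)) (\<lambda>a. flat_of n k a (ip a x))) F =
    (if F \<in> {S \<in> kflats n k. x \<notin> S} then real (PP k) * real (2 ^ (k - 1)) / DD n k else 0)"
  proof (cases "F \<in> kflats n k")
    case True
    then obtain L0 e0 y0 where f: "fl n k L0 e0 y0" "F = aflat n L0 e0" using kflat_fl[OF _ kn] by blast
    show ?thesis unfolding pmf_Qx[OF k1 kn] f(2) fl.sum_Nf_x[OF f(1) k1 x] using True f by simp
  next
    case False
    have "Nf n k a c F = 0" if "a \<in> nonzero_vecs n" for a c
      using Nf_not_kflat[OF False k1] that unfolding nonzero_vecs_def by simp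
    then show ?thesis unfolding pmf_Qx[OF k1 kn] using False by simp
  qed
qed



lemma DD_pos: "1 \<le> k \<Longrightarrow> k \<le> n \<Longrightarrow> DD n k > 0"
proof -
  assume k1: "1 \<le> k" and kn: "k \<le> n"
  have "(1::nat) < 2 ^ n" using k1 kn by (intro one_less_power) auto
  then have "(2::nat) ^ n - 1 > 0" by simp
  then have "real ((2::nat) ^ n - 1) > 0" by (simp only: of_nat_0_less_iff)
  then show ?thesis unfolding DD_def using MG_pos[OF kn] by simp
qed

lemma single_lpn:
  assumes k1: "1 \<le> k" and kn: "k \<le> n" and x: "x \<in> vecs n" and eta: "0 \<le> \<eta>" "\<eta> < 1/2"
  shows "bind_pmf (pmf_of_set (nonzero_vecs n)) (\<lambda>a. bind_pmf (bernoulli_pmf \<eta>) (\<lambda>e. flat_of n k a (ip a x \<noteq> e)))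
         = qxpi n k x (1 - 2 * \<eta>)"
proof (rule pmf_eqI)
  fix F
  define S1 where "S1 = (\<Sum>a\<in>nonzero_vecs n. real (Nf n k a (ip a x) F))"
  define S2 where "S2 = (\<Sum>a\<in>nonzero_vecs n. real (Nf n k a (\<not> ip a x) F))"
  have D: "DD n k > 0" by (rule DD_pos[OF k1 kn])
  have e1: "\<eta> \<le> 1" using eta by simp
  have "pmf (bind_pmf (pmf_of_set (nonzero_vecs n)) (\<lambda>a. bind_pmf (bernoulli_pmf \<eta>) (\<lambda>e. flat_of n k a (ip a x \<noteq> e)))) F
      = (\<Sum>a\<in>nonzero_vecs n. real (Nf n k a (ip a x) F) * \<eta> + real (Nf n k a (\<not> ip a x) F) * (1 - \<eta>)) / DD n k"
    unfolding pmf_mix[OF k1 kn, of "\<lambda>_. bernoulli_pmf \<eta>" "\<lambda>a e. ip a x \<noteq> e"] DD_def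
    using eta e1 by simp
  also have "\<dots> = (\<eta> * S1 + (1 - \<eta>) * S2) / DD n k"
    unfolding S1_def S2_def by (simp add: sum.distrib sum_distrib_left mult.commute)
  finally have L: "pmf (bind_pmf (pmf_of_set (nonzero_vecs n)) (\<lambda>a. bind_pmf (bernoulli_pmf \<eta>) (\<lambda>e. flat_of n k a (ip a x \<noteq> e)))) F
      = (\<eta> * S1 + (1 - \<eta>) * S2) / DD n k" .
  have p1: "0 \<le> 1 - 2 * \<eta>" "1 - 2 * \<eta> \<le> 1" using eta by auto
  have q0v: "pmf (q0 n k) F = (S1 + S2) / (2 * DD n k)"
  proof -
    have "pmf (q0 n k) F = (\<Sum>a\<in>nonzero_vecs n. real (Nf n k a True F) + real (Nf n k a (\<not> True) F)) / (2 * DD n k)"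
      unfolding single_unif[OF k1 kn, symmetric] by (rule pmf_Q1[OF k1 kn])
    also have "(\<Sum>a\<in>nonzero_vecs n. real (Nf n k a True F) + real (Nf n k a (\<not> True) F)) = S1 + S2"
      unfolding S1_def S2_def sum.distrib[symmetric]
      apply (rule sum.cong[OF refl])
      subgoal for a by (cases "ip a x") simp_all
      done
    finally show ?thesis .
  qed
  have qxv: "pmf (qx n k x) F = S2 / DD n k"
    unfolding single_x[OF k1 kn x, symmetric] pmf_Qx[OF k1 kn] S2_def ..
  have R: "pmf (qxpi n k x (1 - 2 * \<eta>)) F = S2 / DD n k * (1 - 2 * \<eta>) + (S1 + S2) / (2 * DD n k) * (1 - (1 - 2 * \<eta>))"
    unfolding qxpi_def pmf_bind using p1 qxv q0v by simp
  show "pmf (bind_pmf (pmf_of_set (nonzero_vecs n)) (\<lambda>a. bind_pmf (bernoulli_pmf \<eta>) (\<lambda>e. flat_of n k a (ip a x \<noteq> e)))) F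
      = pmf (qxpi n k x (1 - 2 * \<eta>)) F"
    unfolding L R using D by (simp add: field_simps)
qed

lemma iid_Suc: "iid_pmf (Suc m) p = bind_pmf p (\<lambda>x. bind_pmf (iid_pmf m p) (\<lambda>xs. return_pmf (x # xs)))"
  by (simp add: iid_pmf_def)

lemma iid_map2:
  "bind_pmf (iid_pmf m p) (\<lambda>as. bind_pmf (iid_pmf m q) (\<lambda>bs. seq_pmf (map2 f as bs))) =
   iid_pmf m (bind_pmf p (\<lambda>a. bind_pmf q (\<lambda>b. f a b)))"
proof (induction m)
  case 0 then show ?case by (simp add: iid_pmf_def bind_return_pmf)
next
  case (Suc m)
  have "bind_pmf (iid_pmf (Suc m) p) (\<lambda>as. bind_pmf (iid_pmf (Suc m) q) (\<lambda>bs. seq_pmf (map2 f as bs))) =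
    bind_pmf p (\<lambda>a. bind_pmf (iid_pmf m p) (\<lambda>as. bind_pmf q (\<lambda>b. bind_pmf (iid_pmf m q) (\<lambda>bs.
      bind_pmf (f a b) (\<lambda>v. bind_pmf (seq_pmf (map2 f as bs)) (\<lambda>vs. return_pmf (v # vs)))))))"
    by (simp add: iid_Suc bind_assoc_pmf bind_return_pmf)
  also have "\<dots> = bind_pmf p (\<lambda>a. bind_pmf q (\<lambda>b. bind_pmf (f a b) (\<lambda>v. bind_pmf (iid_pmf m p) (\<lambda>as.
      bind_pmf (iid_pmf m q) (\<lambda>bs. bind_pmf (seq_pmf (map2 f as bs)) (\<lambda>vs. return_pmf (v # vs)))))))"
    apply (simp only: bind_commute_pmf[of "iid_pmf m p"])
    apply (simp only: bind_commute_pmf[of "iid_pmf m q"])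
    done
  also have "\<dots> = iid_pmf (Suc m) (bind_pmf p (\<lambda>a. bind_pmf q (\<lambda>b. f a b)))"
    unfolding iid_Suc Suc.IH[symmetric] by (simp add: bind_assoc_pmf bind_return_pmf)
  finally show ?case .
qed

lemma map2_map2: "map2 g as (map2 h as es) = map2 (\<lambda>a e. g a (h a e)) as es"
proof (induction as arbitrary: es)
  case Nil then show ?case by simp
next
  case (Cons a as) then show ?case by (cases es) auto
qed

theorem mainTheorem11:
  fixes n k m :: nat
  assumes "1 \<le> k" and "k \<le> n" and "1 \<le> m"
  shows "V_unif n k m = P_unif n k m \<and>
         (\<forall>x \<eta>. x \<in> vecs n \<and> 0 \<le> \<eta> \<and> \<eta> < 1/2 \<longrightarrow> V_lpn n k m x \<eta> = P_xpi n k m x (1 - 2 * \<eta>))"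
proof (intro conjI allI impI)
  show "V_unif n k m = P_unif n k m"
    unfolding V_unif_def P_unif_def iid_map2 single_unif[OF assms(1,2)] ..
  fix x and \<eta> :: real assume H: "x \<in> vecs n \<and> 0 \<le> \<eta> \<and> \<eta> < 1/2"
  show "V_lpn n k m x \<eta> = P_xpi n k m x (1 - 2 * \<eta>)"
    unfolding V_lpn_def P_xpi_def map2_map2 iid_map2
    using single_lpn[OF assms(1,2), of x \<eta>] H by simp
qed


end
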